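(* Let $W\subset T(\mathbf E)^\vee$ be the $\mathbb Q$-span of $\mathbf e_{10}^\vee\mathbf e_4^\vee$, $\mathbf e_4^\vee\mathbf e_{10}^\vee$, $\mathbf e_8^\vee\mathbf e_6^\vee$, $\mathbf e_6^\vee\mathbf e_8^\vee$. Then \[ \iota(U(\mathfrak u)^\vee)\cap W\subseteq\mathrm{span}_{\mathbb Q}\{\mathbf e_{10}^\vee\,ш\,\mathbf e_4^\vee,\ \mathbf e_8^\vee\,ш\,\mathbf e_6^\vee,\ 3\mathbf e_{10}^\vee\mathbf e_4^\vee+\mathbf e_8^\vee\mathbf e_6^\vee\}, \] where $ш$ denotes the shuffle product (so $\mathbf e_a^\vee ш\mathbf e_b^\vee=\mathbf e_a^\vee\mathbf e_b^\vee+\mathbf e_b^\vee\mathbf e_a^\vee$).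
   Context: $\mathbf E=\{\mathbf e_0,\mathbf e_2,\mathbf e_4,\ldots\}$; $T(\mathbf E)$ is the free associative (tensor) $\mathbb Q$-algebra on $\mathbf E$, graded with each $\mathbf e_{2k}$ of degree one, and $T(\mathbf E)^\vee$ is its graded dual, with basis the dual words $\mathbf e^\vee_{2k_1}\cdots\mathbf e^\vee_{2k_n}$ and product the shuffle product. Let $\mathcal L$ be the free Lie algebra on $\{x,y\}$, and for $k\ge0$ let $\varepsilon_{2k}$ be the derivation of $\mathcal L$ with $\varepsilon_{2k}(x)=\mathrm{ad}^{2k}(x)(y)$ and $\varepsilon_{2k}(y)=\sum_{0\le j<k}(-1)^j[\mathrm{ad}^j(x)(y),\mathrm{ad}^{2k-1-j}(x)(y)]$. Let $\mathfrak u$ be the Lie algebra of derivations generated by the $\varepsilon_{2k}$, $U(\mathfrak u)$ its universal enveloping algebra (graded, $\varepsilon_{2k}$ of degree one), and $\iota:U(\mathfrak u)^\vee\hookrightarrow T(\mathbf E)^\vee$ the graded dual of the surjection $T(\mathbf E)\to U(\mathfrak u)$, $\mathbf e_{2k}\mapsto\varepsilon_{2k}$. (Known input: in $\mathfrak u$ one has $[\varepsilon_{10},\varepsilon_4]-3[\varepsilon_8,\varepsilon_6]=0$.) *)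

theory Defs
  imports Complex_Main
begin

text \<open>Noncommutative polynomials over rationals in letters of type 'a, represented as
  coefficient functions on words.  All objects below are finitely supported.
  Letters of T(E): the natural number k stands for the generator e_(2k).
  Letters of the free algebra on x,y: False stands for x, True stands for y.\<close>

type_synonym 'a ncpoly = "'a list \<Rightarrow> rat"

definition supp :: "'a ncpoly \<Rightarrow> 'a list set" where
  "supp p = {w. p w \<noteq> 0}"

definition mono :: "'a list \<Rightarrow> 'a ncpoly" where
  "mono w = (\<lambda>v. if v = w then 1 else 0)"

definition ncmul :: "'a ncpoly \<Rightarrow> 'a ncpoly \<Rightarrow> 'a ncpoly" where
  "ncmul p q = (\<lambda>w. \<Sum>i\<le>length w. p (take i w) * q (drop i w))"

definition comm :: "'a ncpoly \<Rightarrow> 'a ncpoly \<Rightarrow> 'a ncpoly" where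
  "comm p q = (\<lambda>w. ncmul p q w - ncmul q p w)"

inductive_set lie_span :: "'a ncpoly set" where
  gen: "mono [a] \<in> lie_span"
| add: "p \<in> lie_span \<Longrightarrow> q \<in> lie_span \<Longrightarrow> (\<lambda>w. p w + q w) \<in> lie_span"
| smult: "p \<in> lie_span \<Longrightarrow> (\<lambda>w. c * p w) \<in> lie_span"
| bracket: "p \<in> lie_span \<Longrightarrow> q \<in> lie_span \<Longrightarrow> comm p q \<in> lie_span"

definition X :: "bool ncpoly" where "X = mono [False]"
definition Y :: "bool ncpoly" where "Y = mono [True]"

definition adpow :: "nat \<Rightarrow> bool ncpoly \<Rightarrow> bool ncpoly \<Rightarrow> bool ncpoly" where
  "adpow n p q = (comm p ^^ n) q"

text \<open>eps_x k = epsilon_(2k)(x), eps_y k = epsilon_(2k)(y).\<close>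
definition eps_x :: "nat \<Rightarrow> bool ncpoly" where
  "eps_x k = adpow (2*k) X Y"

definition eps_y :: "nat \<Rightarrow> bool ncpoly" where
  "eps_y k = (\<lambda>w. \<Sum>j<k. (-1::rat)^j * comm (adpow j X Y) (adpow (2*k-1-j) X Y) w)"

definition eps_gen :: "nat \<Rightarrow> bool \<Rightarrow> bool ncpoly" where
  "eps_gen k b = (if b then eps_y k else eps_x k)"

text \<open>The derivation epsilon_(2k), extended to the free associative algebra Q<x,y>.\<close>
definition Dword :: "nat \<Rightarrow> bool list \<Rightarrow> bool ncpoly" where
  "Dword k w = (\<lambda>v. \<Sum>i<length w.
      ncmul (ncmul (mono (take i w)) (eps_gen k (w!i))) (mono (drop (Suc i) w)) v)"

definition Dop :: "nat \<Rightarrow> bool ncpoly \<Rightarrow> bool ncpoly" where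
  "Dop k p = (\<lambda>v. \<Sum>w\<in>supp p. p w * Dword k w v)"

text \<open>Action of T(E) on Q<x,y>: e_(2k1)...e_(2kn) acts as the composite of the derivations.\<close>
definition rho :: "nat ncpoly \<Rightarrow> bool ncpoly \<Rightarrow> bool ncpoly" where
  "rho t p = (\<lambda>v. \<Sum>u\<in>supp t. t u * foldr Dop u p v)"

text \<open>Kernel of the Lie map FreeLie(E) \<rightarrow> u (derivations of L vanishing on L).\<close>
definition lie_rel :: "nat ncpoly set" where
  "lie_rel = {P \<in> lie_span. \<forall>p \<in> (lie_span :: bool ncpoly set). rho P p = (\<lambda>_. 0)}"

text \<open>Kernel of T(E) \<rightarrow> U(u): two-sided ideal generated by lie_rel.\<close>
inductive_set U_ideal :: "nat ncpoly set" where
  gen: "P \<in> lie_rel \<Longrightarrow> P \<in> U_ideal"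
| add: "p \<in> U_ideal \<Longrightarrow> q \<in> U_ideal \<Longrightarrow> (\<lambda>w. p w + q w) \<in> U_ideal"
| smult: "p \<in> U_ideal \<Longrightarrow> (\<lambda>w. c * p w) \<in> U_ideal"
| lmul: "p \<in> U_ideal \<Longrightarrow> ncmul (mono u) p \<in> U_ideal"
| rmul: "p \<in> U_ideal \<Longrightarrow> ncmul p (mono u) \<in> U_ideal"

text \<open>Elements of T(E)^dual are finitely supported coefficient functions on words
  (combinations of dual words), paired with T(E) in the obvious way.\<close>
definition pairing :: "nat ncpoly \<Rightarrow> nat ncpoly \<Rightarrow> rat" where
  "pairing phi t = (\<Sum>w\<in>supp t. phi w * t w)"

text \<open>iota(U(u)^dual) inside T(E)^dual.\<close>
definition U_dual :: "nat ncpoly set" where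
  "U_dual = {phi. finite (supp phi) \<and> (\<forall>t \<in> U_ideal. pairing phi t = 0)}"

fun shw :: "'a list \<Rightarrow> 'a list \<Rightarrow> 'a ncpoly" where
  "shw [] v = mono v"
| "shw u [] = mono u"
| "shw (a#u) (b#v) = (\<lambda>w. ncmul (mono [a]) (shw u (b#v)) w + ncmul (mono [b]) (shw (a#u) v) w)"

definition shuffle :: "'a ncpoly \<Rightarrow> 'a ncpoly \<Rightarrow> 'a ncpoly" where
  "shuffle p q = (\<lambda>w. \<Sum>u\<in>supp p. \<Sum>v\<in>supp q. p u * q v * shw u v w)"

end

theory Submission
  imports Defs
begin

definition fs :: "'a ncpoly \<Rightarrow> bool" where "fs p = finite (supp p)"

definition lin :: "('a list \<Rightarrow> 'b ncpoly) \<Rightarrow> 'a ncpoly \<Rightarrow> 'b ncpoly" where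
  "lin f p = (\<lambda>v. \<Sum>w\<in>supp p. p w * f w v)"

lemma Dop_lin: "Dop k = lin (Dword k)"
  by (auto simp: Dop_def lin_def fun_eq_iff)

lemma lin_eq:
  assumes "finite S" "supp p \<subseteq> S"
  shows "lin f p = (\<lambda>v. \<Sum>w\<in>S. p w * f w v)"
proof
  fix v
  show "lin f p v = (\<Sum>w\<in>S. p w * f w v)"
    unfolding lin_def
    by (rule sum.mono_neutral_left) (use assms in \<open>auto simp: supp_def\<close>)
qed

lemma fs_zero[simp]: "fs (\<lambda>w. 0)" by (simp add: fs_def supp_def)
lemma fs_mono[simp]: "fs (mono u)" by (simp add: fs_def supp_def mono_def)
lemma fs_add[simp]: "fs p \<Longrightarrow> fs q \<Longrightarrow> fs (\<lambda>w. p w + q w)"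
  unfolding fs_def supp_def by (rule finite_subset[of _ "{w. p w \<noteq> 0} \<union> {w. q w \<noteq> 0}"]) auto
lemma fs_smult[simp]: "fs p \<Longrightarrow> fs (\<lambda>w. c * p w)"
  unfolding fs_def supp_def by (rule finite_subset[of _ "{w. p w \<noteq> 0}"]) auto
lemma fs_diff[simp]: "fs p \<Longrightarrow> fs q \<Longrightarrow> fs (\<lambda>w. p w - q w)"
  unfolding fs_def supp_def by (rule finite_subset[of _ "{w. p w \<noteq> 0} \<union> {w. q w \<noteq> 0}"]) auto
lemma fs_uminus[simp]: "fs p \<Longrightarrow> fs (\<lambda>w. - p w)"
  unfolding fs_def supp_def by simp
lemma fs_sum[simp]: "finite I \<Longrightarrow> (\<And>i. i \<in> I \<Longrightarrow> fs (h i)) \<Longrightarrow> fs (\<lambda>w. \<Sum>i\<in>I. h i w)"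
proof (induction I rule: finite_induct)
  case empty then show ?case by simp
next
  case (insert x F)
  have "fs (\<lambda>w. h x w + (\<Sum>i\<in>F. h i w))" using insert by (intro fs_add) auto
  then show ?case using insert by simp
qed

lemma fs_ncmul[simp]: assumes "fs p" "fs q" shows "fs (ncmul p q)"
proof -
  have "supp (ncmul p q) \<subseteq> (\<lambda>(u,v). u @ v) ` (supp p \<times> supp q)"
  proof
    fix w assume "w \<in> supp (ncmul p q)"
    then have "(\<Sum>i\<le>length w. p (take i w) * q (drop i w)) \<noteq> 0" by (simp add: supp_def ncmul_def)
    then obtain i where "p (take i w) * q (drop i w) \<noteq> 0" by (meson sum.neutral)
    then have "(take i w, drop i w) \<in> supp p \<times> supp q" by (simp add: supp_def)
    then show "w \<in> (\<lambda>(u,v). u @ v) ` (supp p \<times> supp q)" by (metis (no_types, lifting) append_take_drop_id image_eqI old.prod.case)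
  qed
  then show ?thesis using assms unfolding fs_def by (meson finite_SigmaI finite_imageI finite_subset)
qed

lemma fs_comm[simp]: "fs p \<Longrightarrow> fs q \<Longrightarrow> fs (comm p q)"
  unfolding comm_def by simp

lemma fs_lin[simp]: assumes "fs p" "\<And>w. fs (f w)" shows "fs (lin f p)"
  unfolding lin_def using assms by (intro fs_sum fs_smult) (auto simp: fs_def)

lemma lin_zero[simp]: "lin f (\<lambda>w. 0) = (\<lambda>v. 0)"
  by (simp add: lin_def supp_def)

lemma lin_add:
  assumes "fs p" "fs q"
  shows "lin f (\<lambda>w. p w + q w) = (\<lambda>v. lin f p v + lin f q v)"
proof -
  let ?S = "supp p \<union> supp q"
  have fin: "finite ?S" using assms by (simp add: fs_def)
  have "lin f (\<lambda>w. p w + q w) = (\<lambda>v. \<Sum>w\<in>?S. (p w + q w) * f w v)"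
    by (rule lin_eq[OF fin]) (auto simp: supp_def)
  moreover have "lin f p = (\<lambda>v. \<Sum>w\<in>?S. p w * f w v)" by (rule lin_eq[OF fin]) auto
  moreover have "lin f q = (\<lambda>v. \<Sum>w\<in>?S. q w * f w v)" by (rule lin_eq[OF fin]) auto
  ultimately show ?thesis by (simp add: distrib_right sum.distrib)
qed

lemma lin_smult: "lin f (\<lambda>w. c * p w) = (\<lambda>v. c * lin f p v)"
proof (cases "c = 0")
  case True then show ?thesis by simp
next
  case False
  then have "supp (\<lambda>w. c * p w) = supp p" by (auto simp: supp_def)
  then show ?thesis by (simp add: lin_def sum_distrib_left mult.assoc)
qed

lemma lin_diff:
  assumes "fs p" "fs q"
  shows "lin f (\<lambda>w. p w - q w) = (\<lambda>v. lin f p v - lin f q v)"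
proof -
  have "lin f (\<lambda>w. p w - q w) = lin f (\<lambda>w. p w + (-1) * q w)" by simp
  also have "\<dots> = (\<lambda>v. lin f p v + lin f (\<lambda>w. (-1) * q w) v)"
    by (rule lin_add) (use assms in auto)
  also have "\<dots> = (\<lambda>v. lin f p v + (-1) * lin f q v)" by (simp only: lin_smult)
  finally show ?thesis by simp
qed

lemma lin_sum:
  assumes "finite I" "\<And>i. i \<in> I \<Longrightarrow> fs (h i)"
  shows "lin f (\<lambda>w. \<Sum>i\<in>I. h i w) = (\<lambda>v. \<Sum>i\<in>I. lin f (h i) v)"
  using assms
proof (induction I rule: finite_induct)
  case empty then show ?case by simp
next
  case (insert x F)
  have "lin f (\<lambda>w. \<Sum>i\<in>insert x F. h i w) = lin f (\<lambda>w. h x w + (\<lambda>w. \<Sum>i\<in>F. h i w) w)"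
    using insert by simp
  also have "\<dots> = (\<lambda>v. lin f (h x) v + lin f (\<lambda>w. \<Sum>i\<in>F. h i w) v)"
    using insert by (intro lin_add) auto
  finally show ?case using insert by simp
qed

lemma lin_mono[simp]: "lin f (mono u) = f u"
proof -
  have "supp (mono u) = {u}" by (auto simp: supp_def mono_def)
  then show ?thesis by (simp add: lin_def mono_def)
qed

lemma expand:
  assumes "fs p"
  shows "p = (\<lambda>w. \<Sum>u\<in>supp p. p u * mono u w)"
proof
  fix w
  have "(\<Sum>u\<in>supp p. p u * mono u w) = (\<Sum>u\<in>supp p. if u = w then p u else 0)"
    by (rule sum.cong) (auto simp: mono_def)
  also have "\<dots> = p w" using assms by (auto simp: fs_def supp_def)
  finally show "p w = (\<Sum>u\<in>supp p. p u * mono u w)" by simp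
qed

lemma ncmul_add_left: "ncmul (\<lambda>w. p w + q w) r = (\<lambda>w. ncmul p r w + ncmul q r w)"
  by (simp add: ncmul_def distrib_right sum.distrib)
lemma ncmul_add_right: "ncmul r (\<lambda>w. p w + q w) = (\<lambda>w. ncmul r p w + ncmul r q w)"
  by (simp add: ncmul_def distrib_left sum.distrib)
lemma ncmul_diff_left: "ncmul (\<lambda>w. p w - q w) r = (\<lambda>w. ncmul p r w - ncmul q r w)"
  by (simp add: ncmul_def left_diff_distrib sum_subtractf)
lemma ncmul_diff_right: "ncmul r (\<lambda>w. p w - q w) = (\<lambda>w. ncmul r p w - ncmul r q w)"
  by (simp add: ncmul_def right_diff_distrib sum_subtractf)
lemma ncmul_smult_left: "ncmul (\<lambda>w. c * p w) r = (\<lambda>w. c * ncmul p r w)"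
  by (simp add: ncmul_def sum_distrib_left mult.assoc)
lemma ncmul_smult_right: "ncmul r (\<lambda>w. c * p w) = (\<lambda>w. c * ncmul r p w)"
  by (simp add: ncmul_def sum_distrib_left mult.left_commute)
lemma ncmul_zero_left[simp]: "ncmul (\<lambda>w. 0) r = (\<lambda>w. 0)"
  by (simp add: ncmul_def)
lemma ncmul_zero_right[simp]: "ncmul r (\<lambda>w. 0) = (\<lambda>w. 0)"
  by (simp add: ncmul_def)
lemma ncmul_sum_left: "ncmul (\<lambda>w. \<Sum>i\<in>I. h i w) r = (\<lambda>w. \<Sum>i\<in>I. ncmul (h i) r w)"
  by (simp add: ncmul_def sum_distrib_right) (rule ext, rule sum.swap)
lemma ncmul_sum_right: "ncmul r (\<lambda>w. \<Sum>i\<in>I. h i w) = (\<lambda>w. \<Sum>i\<in>I. ncmul r (h i) w)"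
  by (simp add: ncmul_def sum_distrib_left) (rule ext, rule sum.swap)

lemma ncmul_mono_mono[simp]: "ncmul (mono u) (mono v) = mono (u @ v)"
proof
  fix w
  show "ncmul (mono u) (mono v) w = mono (u @ v) w"
  proof (cases "w = u @ v")
    case True
    have "(\<Sum>i\<le>length w. mono u (take i w) * mono v (drop i w)) = (\<Sum>i\<le>length w. if i = length u then 1 else 0)"
    proof (rule sum.cong[OF refl])
      fix i assume "i \<in> {..length w}"
      then have il: "i \<le> length w" by simp
      show "mono u (take i w) * mono v (drop i w) = (if i = length u then 1 else 0)"
      proof (cases "i = length u")
        case True2: True
        then show ?thesis using True by (simp add: mono_def)
      next
        case False2: False
        then have "take i w \<noteq> u" using il by (metis length_take min_absorb2)
        then show ?thesis using False2 by (simp add: mono_def)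
      qed
    qed
    also have "\<dots> = 1" using True by simp
    finally show ?thesis by (simp add: ncmul_def mono_def True)
  next
    case False
    have "(\<Sum>i\<le>length w. mono u (take i w) * mono v (drop i w)) = 0"
      by (rule sum.neutral) (use False in \<open>auto simp: mono_def\<close>)
    then show ?thesis by (simp add: ncmul_def mono_def False)
  qed
qed

lemma ncmul_Nil_left[simp]: "ncmul (mono []) p = p"
proof
  fix w
  have "(\<Sum>i\<le>length w. mono [] (take i w) * p (drop i w)) = (\<Sum>i\<le>length w. if i = 0 then p w else 0)"
    by (rule sum.cong) (auto simp: mono_def)
  then show "ncmul (mono []) p w = p w" by (simp add: ncmul_def)
qed

lemma ncmul_Nil_right[simp]: "ncmul p (mono []) = p"
proof
  fix w
  have "(\<Sum>i\<le>length w. p (take i w) * mono [] (drop i w)) = (\<Sum>i\<le>length w. if i = length w then p w else 0)"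
    by (rule sum.cong) (auto simp: mono_def)
  then show "ncmul p (mono []) w = p w" by (simp add: ncmul_def)
qed

lemma ncmul_assoc:
  fixes p q r :: "'a ncpoly"
  shows "ncmul (ncmul p q) r = ncmul p (ncmul q r)"
proof
  fix w :: "'a list"
  let ?n = "length w"
  let ?F = "\<lambda>j i. p (take j w) * q (take (i - j) (drop j w)) * r (drop i w)"
  have "ncmul (ncmul p q) r w = (\<Sum>i\<le>?n. \<Sum>j\<le>i. p (take j (take i w)) * q (drop j (take i w)) * r (drop i w))"
    by (simp add: ncmul_def sum_distrib_right min_absorb2)
  also have "\<dots> = (\<Sum>i\<le>?n. \<Sum>j\<in>{j\<in>{..?n}. j \<le> i}. ?F j i)"
  proof (rule sum.cong[OF refl])
    fix i assume i: "i \<in> {..?n}"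
    have "{j\<in>{..?n}. j \<le> i} = {..i}" using i by auto
    moreover have "\<And>j. j \<le> i \<Longrightarrow> take j (take i w) = take j w \<and> drop j (take i w) = take (i - j) (drop j w)"
      by (simp add: min_absorb1 take_drop)
    ultimately show "(\<Sum>j\<le>i. p (take j (take i w)) * q (drop j (take i w)) * r (drop i w)) = (\<Sum>j\<in>{j\<in>{..?n}. j \<le> i}. ?F j i)"
      by (intro sum.cong) auto
  qed
  also have "\<dots> = (\<Sum>j\<le>?n. \<Sum>i\<in>{i\<in>{..?n}. j \<le> i}. ?F j i)"
    by (rule sum.swap_restrict) auto
  also have "\<dots> = (\<Sum>j\<le>?n. p (take j w) * (\<Sum>l\<le>length (drop j w). q (take l (drop j w)) * r (drop l (drop j w))))"
  proof (rule sum.cong[OF refl])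
    fix j assume j: "j \<in> {..?n}"
    have img: "{i\<in>{..?n}. j \<le> i} = (\<lambda>l. l + j) ` {..length (drop j w)}"
    proof
      show "{i\<in>{..?n}. j \<le> i} \<subseteq> (\<lambda>l. l + j) ` {..length (drop j w)}"
      proof
        fix i assume "i \<in> {i\<in>{..?n}. j \<le> i}"
        then have "i = (i - j) + j" "i - j \<in> {..length (drop j w)}" by auto
        then show "i \<in> (\<lambda>l. l + j) ` {..length (drop j w)}" by blast
      qed
    qed (use j in auto)
    have "(\<Sum>i\<in>{i\<in>{..?n}. j \<le> i}. ?F j i) = (\<Sum>l\<le>length (drop j w). ?F j (l + j))"
      unfolding img by (subst sum.reindex) (auto simp: inj_on_def)
    also have "\<dots> = p (take j w) * (\<Sum>l\<le>length (drop j w). q (take l (drop j w)) * r (drop l (drop j w)))"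
      by (simp add: sum_distrib_left mult.assoc add.commute)
    finally show "(\<Sum>i\<in>{i\<in>{..?n}. j \<le> i}. ?F j i) = \<dots>" .
  qed
  also have "\<dots> = ncmul p (ncmul q r) w" by (simp add: ncmul_def)
  finally show "ncmul (ncmul p q) r w = ncmul p (ncmul q r) w" .
qed


lemma ncmul_mono_mono_assoc[simp]: "ncmul (mono u) (ncmul (mono v) p) = ncmul (mono (u @ v)) p"
  by (simp flip: ncmul_assoc)


section \<open>The derivations\<close>

lemma Dword_Nil[simp]: "Dword k [] = (\<lambda>v. 0)"
  by (simp add: Dword_def)

lemma Dword_Cons:
  "Dword k (a # s) = (\<lambda>v. ncmul (eps_gen k a) (mono s) v + ncmul (mono [a]) (Dword k s) v)"
proof
  fix v
  let ?T = "\<lambda>i. ncmul (ncmul (mono (take i (a # s))) (eps_gen k ((a # s) ! i))) (mono (drop (Suc i) (a # s))) v"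
  have "Dword k (a # s) v = (\<Sum>i<Suc (length s). ?T i)" by (simp add: Dword_def)
  also have "\<dots> = ?T 0 + (\<Sum>j<length s. ?T (Suc j))" by (rule sum.lessThan_Suc_shift)
  also have "?T 0 = ncmul (eps_gen k a) (mono s) v" by simp
  also have "(\<Sum>j<length s. ?T (Suc j)) = (\<Sum>j<length s. ncmul (mono [a])
        (ncmul (ncmul (mono (take j s)) (eps_gen k (s ! j))) (mono (drop (Suc j) s))) v)"
  proof (rule sum.cong[OF refl])
    fix j
    have "mono (a # take j s) = ncmul (mono [a]) (mono (take j s))" by simp
    then show "?T (Suc j) = ncmul (mono [a]) (ncmul (ncmul (mono (take j s)) (eps_gen k (s ! j))) (mono (drop (Suc j) s))) v"
      by (simp add: ncmul_assoc)
  qed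
  also have "\<dots> = ncmul (mono [a]) (Dword k s) v"
    by (simp add: Dword_def ncmul_sum_right)
  finally show "Dword k (a # s) v = ncmul (eps_gen k a) (mono s) v + ncmul (mono [a]) (Dword k s) v" .
qed

lemma Dword_append:
  "Dword k (u @ v) = (\<lambda>x. ncmul (Dword k u) (mono v) x + ncmul (mono u) (Dword k v) x)"
proof (induction u)
  case Nil then show ?case by simp
next
  case (Cons a u)
  show ?case
    by (simp add: Cons Dword_Cons ncmul_add_left ncmul_add_right ncmul_assoc fun_eq_iff)
qed

lemma lin_Dword_mono_left:
  assumes fq: "fs q"
  shows "lin (Dword k) (ncmul (mono u) q) = (\<lambda>x. ncmul (Dword k u) q x + ncmul (mono u) (lin (Dword k) q) x)"
proof -
  let ?S = "supp q"
  have fin: "finite ?S" using fq by (simp add: fs_def)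
  have e: "(\<lambda>w. \<Sum>v\<in>?S. q v * mono v w) = q" by (rule expand[OF fq, symmetric])
  have q1: "ncmul (mono u) q = (\<lambda>w. \<Sum>v\<in>?S. q v * mono (u @ v) w)"
  proof -
    have "ncmul (mono u) q = ncmul (mono u) (\<lambda>w. \<Sum>v\<in>?S. q v * mono v w)" by (simp only: e)
    also have "\<dots> = (\<lambda>w. \<Sum>v\<in>?S. q v * mono (u @ v) w)"
      by (simp add: ncmul_sum_right ncmul_smult_right)
    finally show ?thesis .
  qed
  have "lin (Dword k) (ncmul (mono u) q) = (\<lambda>x. \<Sum>v\<in>?S. lin (Dword k) (\<lambda>w. q v * mono (u @ v) w) x)"
    unfolding q1 by (rule lin_sum[OF fin]) simp
  also have "\<dots> = (\<lambda>x. \<Sum>v\<in>?S. q v * Dword k (u @ v) x)"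
    by (simp add: lin_smult)
  also have "\<dots> = (\<lambda>x. \<Sum>v\<in>?S. q v * ncmul (Dword k u) (mono v) x + q v * ncmul (mono u) (Dword k v) x)"
    by (simp add: Dword_append distrib_left)
  also have "\<dots> = (\<lambda>x. ncmul (Dword k u) q x + ncmul (mono u) (lin (Dword k) q) x)"
  proof -
    have a: "ncmul (Dword k u) q = (\<lambda>x. \<Sum>v\<in>?S. q v * ncmul (Dword k u) (mono v) x)"
    proof -
      have "ncmul (Dword k u) q = ncmul (Dword k u) (\<lambda>w. \<Sum>v\<in>?S. q v * mono v w)" by (simp only: e)
      also have "\<dots> = (\<lambda>x. \<Sum>v\<in>?S. q v * ncmul (Dword k u) (mono v) x)"
        by (simp add: ncmul_sum_right ncmul_smult_right)
      finally show ?thesis .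
    qed
    have b: "ncmul (mono u) (lin (Dword k) q) = (\<lambda>x. \<Sum>v\<in>?S. q v * ncmul (mono u) (Dword k v) x)"
      by (simp add: lin_def ncmul_sum_right ncmul_smult_right)
    show ?thesis unfolding a b by (simp add: sum.distrib)
  qed
  finally show ?thesis .
qed

lemma lin_Dword_der:
  assumes fp: "fs p" and fq: "fs q"
  shows "lin (Dword k) (ncmul p q) = (\<lambda>x. ncmul (lin (Dword k) p) q x + ncmul p (lin (Dword k) q) x)"
proof -
  let ?S = "supp p"
  have fin: "finite ?S" using fp by (simp add: fs_def)
  have e: "(\<lambda>w. \<Sum>u\<in>?S. p u * mono u w) = p" by (rule expand[OF fp, symmetric])
  have p1: "ncmul p q = (\<lambda>w. \<Sum>u\<in>?S. p u * ncmul (mono u) q w)"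
  proof -
    have "ncmul p q = ncmul (\<lambda>w. \<Sum>u\<in>?S. p u * mono u w) q" by (simp only: e)
    also have "\<dots> = (\<lambda>w. \<Sum>u\<in>?S. p u * ncmul (mono u) q w)"
      by (simp add: ncmul_sum_left ncmul_smult_left)
    finally show ?thesis .
  qed
  have "lin (Dword k) (ncmul p q) = (\<lambda>x. \<Sum>u\<in>?S. lin (Dword k) (\<lambda>w. p u * ncmul (mono u) q w) x)"
    unfolding p1 by (rule lin_sum[OF fin]) (simp add: fq)
  also have "\<dots> = (\<lambda>x. \<Sum>u\<in>?S. p u * ncmul (Dword k u) q x + p u * ncmul (mono u) (lin (Dword k) q) x)"
    by (simp add: lin_smult lin_Dword_mono_left[OF fq] distrib_left)
  also have "\<dots> = (\<lambda>x. ncmul (lin (Dword k) p) q x + ncmul p (lin (Dword k) q) x)"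
  proof -
    have a: "ncmul (lin (Dword k) p) q = (\<lambda>x. \<Sum>u\<in>?S. p u * ncmul (Dword k u) q x)"
      by (simp add: lin_def ncmul_sum_left ncmul_smult_left)
    have b: "ncmul p (lin (Dword k) q) = (\<lambda>x. \<Sum>u\<in>?S. p u * ncmul (mono u) (lin (Dword k) q) x)"
    proof -
      have "ncmul p (lin (Dword k) q) = ncmul (\<lambda>w. \<Sum>u\<in>?S. p u * mono u w) (lin (Dword k) q)" by (simp only: e)
      also have "\<dots> = (\<lambda>x. \<Sum>u\<in>?S. p u * ncmul (mono u) (lin (Dword k) q) x)"
        by (simp add: ncmul_sum_left ncmul_smult_left)
      finally show ?thesis .
    qed
    show ?thesis unfolding a b by (simp add: sum.distrib)
  qed
  finally show ?thesis .
qed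


lemma adpow_Suc: "adpow (Suc n) p q = comm p (adpow n p q)"
  by (simp add: adpow_def)
lemma adpow_0: "adpow 0 p q = q"
  by (simp add: adpow_def)

lemma fs_adpow: "fs p \<Longrightarrow> fs q \<Longrightarrow> fs (adpow n p q)"
  by (induction n) (simp_all add: adpow_Suc adpow_0)

lemma fs_X[simp]: "fs X" and fs_Y[simp]: "fs Y" by (simp_all add: X_def Y_def)

lemma fs_eps_gen[simp]: "fs (eps_gen k a)"
  by (auto simp: eps_gen_def eps_x_def eps_y_def intro!: fs_adpow fs_sum fs_smult fs_comm)

lemma fs_Dword[simp]: "fs (Dword k w)"
  unfolding Dword_def by (intro fs_sum) auto

lemma fs_Dop[simp]: "fs p \<Longrightarrow> fs (Dop k p)"
  unfolding Dop_lin by (rule fs_lin) auto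

section \<open>Derivation-like operators\<close>

definition goodop :: "(bool ncpoly \<Rightarrow> bool ncpoly) \<Rightarrow> bool" where
  "goodop T \<longleftrightarrow> (\<forall>p. fs p \<longrightarrow> fs (T p))
     \<and> (\<forall>p q. fs p \<longrightarrow> fs q \<longrightarrow> T (\<lambda>w. p w + q w) = (\<lambda>w. T p w + T q w))
     \<and> (\<forall>p c. fs p \<longrightarrow> T (\<lambda>w. c * p w) = (\<lambda>w. c * T p w))
     \<and> (\<forall>p q. fs p \<longrightarrow> fs q \<longrightarrow> T (ncmul p q) = (\<lambda>w. ncmul (T p) q w + ncmul p (T q) w))"

lemma goodopD:
  assumes "goodop T"
  shows "\<And>p. fs p \<Longrightarrow> fs (T p)"
    and "\<And>p q. fs p \<Longrightarrow> fs q \<Longrightarrow> T (\<lambda>w. p w + q w) = (\<lambda>w. T p w + T q w)"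
    and "\<And>p c. fs p \<Longrightarrow> T (\<lambda>w. c * p w) = (\<lambda>w. c * T p w)"
    and "\<And>p q. fs p \<Longrightarrow> fs q \<Longrightarrow> T (ncmul p q) = (\<lambda>w. ncmul (T p) q w + ncmul p (T q) w)"
  using assms unfolding goodop_def by blast+

lemma goodop_diff:
  assumes "goodop T" "fs p" "fs q"
  shows "T (\<lambda>w. p w - q w) = (\<lambda>w. T p w - T q w)"
proof -
  have "T (\<lambda>w. p w - q w) = T (\<lambda>w. p w + (\<lambda>w. (-1) * q w) w)" by simp
  also have "\<dots> = (\<lambda>w. T p w + T (\<lambda>w. (-1) * q w) w)"
    by (rule goodopD(2)[OF assms(1) assms(2)]) (rule fs_smult[OF assms(3)])
  also have "\<dots> = (\<lambda>w. T p w + (-1) * T q w)" by (simp only: goodopD(3)[OF assms(1) assms(3)])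
  finally show ?thesis by simp
qed

lemma goodop_zero:
  assumes "goodop T" shows "T (\<lambda>w. 0) = (\<lambda>w. 0)"
proof -
  have "T (\<lambda>w. 0 * (\<lambda>w. 0) w) = (\<lambda>w. 0 * T (\<lambda>w. 0) w)" by (rule goodopD(3)[OF assms]) simp
  then show ?thesis by simp
qed

lemma goodop_Dop: "goodop (Dop k)"
  unfolding goodop_def
  by (auto simp: Dop_lin lin_add lin_smult lin_Dword_der simp del: fs_Dop intro!: fs_lin)

lemma goodop_commutator:
  assumes A: "goodop A" and B: "goodop B"
  shows "goodop (\<lambda>p w. A (B p) w - B (A p) w)"
  unfolding goodop_def
proof (intro conjI allI impI)
  fix p :: "bool ncpoly" assume "fs p"
  then show "fs (\<lambda>w. A (B p) w - B (A p) w)" using goodopD(1)[OF A] goodopD(1)[OF B] by simp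
next
  fix p q :: "bool ncpoly" assume fp: "fs p" and fq: "fs q"
  have fBp: "fs (B p)" "fs (B q)" "fs (A p)" "fs (A q)" using fp fq goodopD(1)[OF A] goodopD(1)[OF B] by auto
  show "(\<lambda>w. A (B (\<lambda>w. p w + q w)) w - B (A (\<lambda>w. p w + q w)) w) =
        (\<lambda>w. (A (B p) w - B (A p) w) + (A (B q) w - B (A q) w))"
    using fp fq fBp by (simp add: goodopD(2)[OF A] goodopD(2)[OF B] fun_eq_iff algebra_simps)
next
  fix p :: "bool ncpoly" and c :: rat assume fp: "fs p"
  have fBp: "fs (B p)" "fs (A p)" using fp goodopD(1)[OF A] goodopD(1)[OF B] by auto
  show "(\<lambda>w. A (B (\<lambda>w. c * p w)) w - B (A (\<lambda>w. c * p w)) w) = (\<lambda>w. c * (A (B p) w - B (A p) w))"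
    using fp fBp by (simp add: goodopD(3)[OF A] goodopD(3)[OF B] right_diff_distrib)
next
  fix p q :: "bool ncpoly" assume fp: "fs p" and fq: "fs q"
  have f: "fs (B p)" "fs (B q)" "fs (A p)" "fs (A q)" "fs (A (B p))" "fs (B (A p))" "fs (A (B q))" "fs (B (A q))"
    using fp fq goodopD(1)[OF A] goodopD(1)[OF B] by auto
  have AB: "A (B (ncmul p q)) = (\<lambda>w. ncmul (A (B p)) q w + ncmul (B p) (A q) w + (ncmul (A p) (B q) w + ncmul p (A (B q)) w))"
    using fp fq f by (simp add: goodopD(4)[OF A] goodopD(4)[OF B] goodopD(2)[OF A])
  have BA: "B (A (ncmul p q)) = (\<lambda>w. ncmul (B (A p)) q w + ncmul (A p) (B q) w + (ncmul (B p) (A q) w + ncmul p (B (A q)) w))"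
    using fp fq f by (simp add: goodopD(4)[OF A] goodopD(4)[OF B] goodopD(2)[OF B])
  show "(\<lambda>w. A (B (ncmul p q)) w - B (A (ncmul p q)) w) =
        (\<lambda>w. ncmul (\<lambda>w. A (B p) w - B (A p) w) q w + ncmul p (\<lambda>w. A (B q) w - B (A q) w) w)"
    unfolding AB BA by (simp add: ncmul_diff_left ncmul_diff_right fun_eq_iff algebra_simps)
qed

lemma goodop_lincomb:
  assumes A: "goodop A" and B: "goodop B"
  shows "goodop (\<lambda>p w. A p w - c * B p w)"
  unfolding goodop_def
proof (intro conjI allI impI)
  fix p :: "bool ncpoly" assume "fs p"
  then show "fs (\<lambda>w. A p w - c * B p w)" using goodopD(1)[OF A] goodopD(1)[OF B] by simp
next
  fix p q :: "bool ncpoly" assume fp: "fs p" and fq: "fs q"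
  show "(\<lambda>w. A (\<lambda>w. p w + q w) w - c * B (\<lambda>w. p w + q w) w) =
        (\<lambda>w. (A p w - c * B p w) + (A q w - c * B q w))"
    using fp fq by (simp add: goodopD(2)[OF A] goodopD(2)[OF B] algebra_simps)
next
  fix p :: "bool ncpoly" and d :: rat assume fp: "fs p"
  show "(\<lambda>w. A (\<lambda>w. d * p w) w - c * B (\<lambda>w. d * p w) w) = (\<lambda>w. d * (A p w - c * B p w))"
    using fp by (simp add: goodopD(3)[OF A] goodopD(3)[OF B] algebra_simps)
next
  fix p q :: "bool ncpoly" assume fp: "fs p" and fq: "fs q"
  show "(\<lambda>w. A (ncmul p q) w - c * B (ncmul p q) w) =
        (\<lambda>w. ncmul (\<lambda>w. A p w - c * B p w) q w + ncmul p (\<lambda>w. A q w - c * B q w) w)"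
    using fp fq by (simp add: goodopD(4)[OF A] goodopD(4)[OF B] ncmul_diff_left ncmul_diff_right
        ncmul_smult_left ncmul_smult_right fun_eq_iff algebra_simps)
qed

lemma goodop_kills_lie_span:
  assumes T: "goodop T" and TX: "T (mono [False]) = (\<lambda>w. 0)" and TY: "T (mono [True]) = (\<lambda>w. 0)"
  assumes "p \<in> lie_span"
  shows "fs p \<and> T p = (\<lambda>w. 0)"
  using assms(4)
proof (induction rule: lie_span.induct)
  case (gen a)
  then show ?case using TX TY by (cases a) auto
next
  case (add p q)
  then show ?case by (simp add: goodopD(2)[OF T])
next
  case (smult p c)
  then show ?case by (simp add: goodopD(3)[OF T])
next
  case (bracket p q)
  have "T (comm p q) = (\<lambda>w. T (ncmul p q) w - T (ncmul q p) w)"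
    unfolding comm_def using bracket by (intro goodop_diff[OF T]) auto
  also have "\<dots> = (\<lambda>w. 0)" using bracket by (simp add: goodopD(4)[OF T])
  finally show ?case using bracket by simp
qed


section \<open>Verified computation with coefficient tries\<close>

type_synonym plist = "(bool list \<times> int) list"

definition interp :: "plist \<Rightarrow> bool ncpoly" where
  "interp L = (\<lambda>v. \<Sum>(w,c)\<leftarrow>L. of_int c * mono w v)"

lemma interp_Nil[simp]: "interp [] = (\<lambda>v. 0)"
  by (simp add: interp_def)
lemma interp_Cons[simp]: "interp ((w,c) # L) = (\<lambda>v. of_int c * mono w v + interp L v)"
  by (simp add: interp_def)
lemma fs_interp[simp]: "fs (interp L)"
proof (induction L)
  case Nil then show ?case by simp
next
  case (Cons x L) then show ?case by (cases x) simp
qed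

datatype tr = E | N int tr tr

fun tins :: "bool list \<Rightarrow> int \<Rightarrow> tr \<Rightarrow> tr" where
  "tins [] c E = N c E E"
| "tins [] c (N a l r) = N (a+c) l r"
| "tins (False#w) c E = N 0 (tins w c E) E"
| "tins (True#w) c E = N 0 E (tins w c E)"
| "tins (False#w) c (N a l r) = N a (tins w c l) r"
| "tins (True#w) c (N a l r) = N a l (tins w c r)"

fun tzero :: "tr \<Rightarrow> bool" where
  "tzero E = True"
| "tzero (N a l r) = (a = 0 \<and> tzero l \<and> tzero r)"

fun tval :: "tr \<Rightarrow> bool ncpoly" where
  "tval E v = 0"
| "tval (N a l r) [] = of_int a"
| "tval (N a l r) (False # v) = tval l v"
| "tval (N a l r) (True # v) = tval r v"

lemma tval_N_Cons[simp]: "tval (N a l r) (b # v) = (if b then tval r v else tval l v)"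
  by (cases b) simp_all

lemma tval_E[simp]: "tval E = (\<lambda>v. 0)"
  by (rule ext) simp

lemma tval_tins: "tval (tins w c t) v = tval t v + of_int c * mono w v"
proof (induction w arbitrary: t v)
  case Nil
  then show ?case by (cases t; cases v) (auto simp: mono_def)
next
  case (Cons b w)
  show ?case
    by (cases t; cases v; cases b) (auto simp: mono_def Cons)
qed

lemma tzero_tval: "tzero t \<Longrightarrow> tval t v = 0"
proof (induction t arbitrary: v)
  case E then show ?case by simp
next
  case (N a l r)
  then show ?case by (cases v) auto
qed

fun accP :: "int \<Rightarrow> bool list \<Rightarrow> bool list \<Rightarrow> plist \<Rightarrow> tr \<Rightarrow> tr" where
  "accP c pre suf [] acc = acc"
| "accP c pre suf ((u,b)#g) acc = accP c pre suf g (tins (pre@u@suf) (c*b) acc)"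

fun accW :: "plist \<Rightarrow> plist \<Rightarrow> int \<Rightarrow> bool list \<Rightarrow> bool list \<Rightarrow> tr \<Rightarrow> tr" where
  "accW gx gy c pre [] acc = acc"
| "accW gx gy c pre (a#suf) acc = accW gx gy c (pre@[a]) suf (accP c pre suf (if a then gy else gx) acc)"

fun accD :: "plist \<Rightarrow> plist \<Rightarrow> int \<Rightarrow> plist \<Rightarrow> tr \<Rightarrow> tr" where
  "accD gx gy c [] acc = acc"
| "accD gx gy c ((w,b)#L) acc = accD gx gy c L (accW gx gy (c*b) [] w acc)"

fun accM :: "int \<Rightarrow> plist \<Rightarrow> plist \<Rightarrow> tr \<Rightarrow> tr" where
  "accM c [] B acc = acc"
| "accM c ((u,a)#A) B acc = accM c A B (accP (c*a) u [] B acc)"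

lemma tins_cong: "w = w' \<Longrightarrow> c = c' \<Longrightarrow> tins w c L = tins w' c' L" by simp
lemma accP_cong: "c = c' \<Longrightarrow> g = g' \<Longrightarrow> acc = acc' \<Longrightarrow> accP c pre suf g acc = accP c' pre suf g' acc'" by simp
lemma accW_cong: "c = c' \<Longrightarrow> acc = acc' \<Longrightarrow> accW gx gy c pre w acc = accW gx gy c' pre w acc'" by simp
lemma accD_cong: "acc = acc' \<Longrightarrow> accD gx gy c L acc = accD gx gy c L acc'" by simp
lemma accM_cong: "c = c' \<Longrightarrow> acc = acc' \<Longrightarrow> accM c A B acc = accM c' A B acc'" by simp

lemma tval_accP:
  "tval (accP c pre suf g acc) = (\<lambda>v. tval acc v + of_int c * ncmul (ncmul (mono pre) (interp g)) (mono suf) v)"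
proof (induction g arbitrary: acc)
  case Nil then show ?case by simp
next
  case (Cons x g)
  obtain u b where x: "x = (u,b)" by (cases x)
  show ?case
    by (simp add: x Cons tval_tins ncmul_add_left ncmul_add_right ncmul_smult_left ncmul_smult_right
        ncmul_assoc fun_eq_iff algebra_simps)
qed

lemma tval_accW:
  assumes hx: "interp gx = eps_gen k False" and hy: "interp gy = eps_gen k True"
  shows "tval (accW gx gy c pre w acc) = (\<lambda>v. tval acc v + of_int c * ncmul (mono pre) (Dword k w) v)"
proof (induction w arbitrary: pre acc)
  case Nil then show ?case by simp
next
  case (Cons a suf)
  have g: "interp (if a then gy else gx) = eps_gen k a" using hx hy by (cases a) auto
  show ?case
    by (simp add: Cons tval_accP g Dword_Cons ncmul_add_right ncmul_assoc fun_eq_iff algebra_simps)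
qed

lemma tval_accD:
  assumes hx: "interp gx = eps_gen k False" and hy: "interp gy = eps_gen k True"
  shows "tval (accD gx gy c L acc) = (\<lambda>v. tval acc v + of_int c * Dop k (interp L) v)"
proof (induction L arbitrary: acc)
  case Nil then show ?case by (simp add: Dop_lin)
next
  case (Cons x L)
  obtain w b where x: "x = (w,b)" by (cases x)
  have "Dop k (interp (x # L)) = (\<lambda>v. of_int b * Dword k w v + Dop k (interp L) v)"
    by (simp add: x Dop_lin lin_add lin_smult)
  then show ?case
    by (simp add: x Cons tval_accW[OF hx hy] fun_eq_iff algebra_simps)
qed

lemma tval_accM:
  "tval (accM c A B acc) = (\<lambda>v. tval acc v + of_int c * ncmul (interp A) (interp B) v)"
proof (induction A arbitrary: acc)
  case Nil then show ?case by simp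
next
  case (Cons x A)
  obtain u a where x: "x = (u,a)" by (cases x)
  show ?case
    by (simp add: x Cons tval_accP ncmul_add_left ncmul_smult_left fun_eq_iff algebra_simps)
qed

lemmas comp_congs = tins_cong accP_cong accW_cong accD_cong accM_cong

lemmas comp_simps = tins.simps accP.simps accW.simps accD.simps accM.simps tzero.simps
  append_Nil append_Cons if_True if_False arith_simps more_arith_simps rel_simps simp_thms
  arith_special inc.simps


definition adl0 :: plist where "adl0 = [([True], 1)]"
definition adl1 :: plist where "adl1 = [([False,True], 1), ([True,False], - 1)]"
definition adl2 :: plist where "adl2 = [([False,False,True], 1), ([False,True,False], - 2), ([True,False,False], 1)]"
definition adl3 :: plist where "adl3 = [([False,False,False,True], 1), ([False,False,True,False], - 3), ([False,True,False,False], 3), ([True,False,False,False], - 1)]"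
definition adl4 :: plist where "adl4 = [([False,False,False,False,True], 1), ([False,False,False,True,False], - 4), ([False,False,True,False,False], 6), ([False,True,False,False,False], - 4), ([True,False,False,False,False], 1)]"
definition adl5 :: plist where "adl5 = [([False,False,False,False,False,True], 1), ([False,False,False,False,True,False], - 5), ([False,False,False,True,False,False], 10), ([False,False,True,False,False,False], - 10), ([False,True,False,False,False,False], 5), ([True,False,False,False,False,False], - 1)]"
definition adl6 :: plist where "adl6 = [([False,False,False,False,False,False,True], 1), ([False,False,False,False,False,True,False], - 6), ([False,False,False,False,True,False,False], 15), ([False,False,False,True,False,False,False], - 20), ([False,False,True,False,False,False,False], 15), ([False,True,False,False,False,False,False], - 6), ([True,False,False,False,False,False,False], 1)]"
definition adl7 :: plist where "adl7 = [([False,False,False,False,False,False,False,True], 1), ([False,False,False,False,False,False,True,False], - 7), ([False,False,False,False,False,True,False,False], 21), ([False,False,False,False,True,False,False,False], - 35), ([False,False,False,True,False,False,False,False], 35), ([False,False,True,False,False,False,False,False], - 21), ([False,True,False,False,False,False,False,False], 7), ([True,False,False,False,False,False,False,False], - 1)]"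
definition adl8 :: plist where "adl8 = [([False,False,False,False,False,False,False,False,True], 1), ([False,False,False,False,False,False,False,True,False], - 8), ([False,False,False,False,False,False,True,False,False], 28), ([False,False,False,False,False,True,False,False,False], - 56), ([False,False,False,False,True,False,False,False,False], 70), ([False,False,False,True,False,False,False,False,False], - 56), ([False,False,True,False,False,False,False,False,False], 28), ([False,True,False,False,False,False,False,False,False], - 8), ([True,False,False,False,False,False,False,False,False], 1)]"
definition adl9 :: plist where "adl9 = [([False,False,False,False,False,False,False,False,False,True], 1), ([False,False,False,False,False,False,False,False,True,False], - 9), ([False,False,False,False,False,False,False,True,False,False], 36), ([False,False,False,False,False,False,True,False,False,False], - 84), ([False,False,False,False,False,True,False,False,False,False], 126), ([False,False,False,False,True,False,False,False,False,False], - 126), ([False,False,False,True,False,False,False,False,False,False], 84), ([False,False,True,False,False,False,False,False,False,False], - 36), ([False,True,False,False,False,False,False,False,False,False], 9), ([True,False,False,False,False,False,False,False,False,False], - 1)]"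
definition adl10 :: plist where "adl10 = [([False,False,False,False,False,False,False,False,False,False,True], 1), ([False,False,False,False,False,False,False,False,False,True,False], - 10), ([False,False,False,False,False,False,False,False,True,False,False], 45), ([False,False,False,False,False,False,False,True,False,False,False], - 120), ([False,False,False,False,False,False,True,False,False,False,False], 210), ([False,False,False,False,False,True,False,False,False,False,False], - 252), ([False,False,False,False,True,False,False,False,False,False,False], 210), ([False,False,False,True,False,False,False,False,False,False,False], - 120), ([False,False,True,False,False,False,False,False,False,False,False], 45), ([False,True,False,False,False,False,False,False,False,False,False], - 10), ([True,False,False,False,False,False,False,False,False,False,False], 1)]"
definition g2y :: plist where "g2y = [([False,False,False,True,True], - 1), ([False,False,True,False,True], 4), ([False,False,True,True,False], - 1), ([False,True,False,False,True], - 6), ([False,True,False,True,False], 4), ([False,True,True,False,False], - 1), ([True,False,False,False,True], 4), ([True,False,False,True,False], - 6), ([True,False,True,False,False], 4), ([True,True,False,False,False], - 1)]"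
definition g3y :: plist where "g3y = [([False,False,False,False,False,True,True], - 1), ([False,False,False,False,True,False,True], 6), ([False,False,False,False,True,True,False], - 1), ([False,False,False,True,False,False,True], - 15), ([False,False,False,True,False,True,False], 6), ([False,False,False,True,True,False,False], - 1), ([False,False,True,False,False,False,True], 20), ([False,False,True,False,False,True,False], - 15), ([False,False,True,False,True,False,False], 6), ([False,False,True,True,False,False,False], - 1), ([False,True,False,False,False,False,True], - 15), ([False,True,False,False,False,True,False], 20), ([False,True,False,False,True,False,False], - 15), ([False,True,False,True,False,False,False], 6), ([False,True,True,False,False,False,False], - 1), ([True,False,False,False,False,False,True], 6), ([True,False,False,False,False,True,False], - 15), ([True,False,False,False,True,False,False], 20), ([True,False,False,True,False,False,False], - 15), ([True,False,True,False,False,False,False], 6), ([True,True,False,False,False,False,False], - 1)]"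
definition g4y :: plist where "g4y = [([False,False,False,False,False,False,False,True,True], - 1), ([False,False,False,False,False,False,True,False,True], 8), ([False,False,False,False,False,False,True,True,False], - 1), ([False,False,False,False,False,True,False,False,True], - 28), ([False,False,False,False,False,True,False,True,False], 8), ([False,False,False,False,False,True,True,False,False], - 1), ([False,False,False,False,True,False,False,False,True], 56), ([False,False,False,False,True,False,False,True,False], - 28), ([False,False,False,False,True,False,True,False,False], 8), ([False,False,False,False,True,True,False,False,False], - 1), ([False,False,False,True,False,False,False,False,True], - 70), ([False,False,False,True,False,False,False,True,False], 56), ([False,False,False,True,False,False,True,False,False], - 28), ([False,False,False,True,False,True,False,False,False], 8), ([False,False,False,True,True,False,False,False,False], - 1), ([False,False,True,False,False,False,False,False,True], 56), ([False,False,True,False,False,False,False,True,False], - 70), ([False,False,True,False,False,False,True,False,False], 56), ([False,False,True,False,False,True,False,False,False], - 28), ([False,False,True,False,True,False,False,False,False], 8), ([False,False,True,True,False,False,False,False,False], - 1), ([False,True,False,False,False,False,False,False,True], - 28), ([False,True,False,False,False,False,False,True,False], 56), ([False,True,False,False,False,False,True,False,False], - 70), ([False,True,False,False,False,True,False,False,False], 56), ([False,True,False,False,True,False,False,False,False], - 28), ([False,True,False,True,False,False,False,False,False], 8), ([False,True,True,False,False,False,False,False,False], - 1), ([True,False,False,False,False,False,False,False,True], 8), ([True,False,False,False,False,False,False,True,False], - 28), ([True,False,False,False,False,False,True,False,False], 56), ([True,False,False,False,False,True,False,False,False], - 70), ([True,False,False,False,True,False,False,False,False], 56), ([True,False,False,True,False,False,False,False,False],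 - 28), ([True,False,True,False,False,False,False,False,False], 8), ([True,True,False,False,False,False,False,False,False], - 1)]"
definition g5y :: plist where "g5y = [([False,False,False,False,False,False,False,False,False,True,True], - 1), ([False,False,False,False,False,False,False,False,True,False,True], 10), ([False,False,False,False,False,False,False,False,True,True,False], - 1), ([False,False,False,False,False,False,False,True,False,False,True], - 45), ([False,False,False,False,False,False,False,True,False,True,False], 10), ([False,False,False,False,False,False,False,True,True,False,False], - 1), ([False,False,False,False,False,False,True,False,False,False,True], 120), ([False,False,False,False,False,False,True,False,False,True,False], - 45), ([False,False,False,False,False,False,True,False,True,False,False], 10), ([False,False,False,False,False,False,True,True,False,False,False], - 1), ([False,False,False,False,False,True,False,False,False,False,True], - 210), ([False,False,False,False,False,True,False,False,False,True,False], 120), ([False,False,False,False,False,True,False,False,True,False,False], - 45), ([False,False,False,False,False,True,False,True,False,False,False], 10), ([False,False,False,False,False,True,True,False,False,False,False], - 1), ([False,False,False,False,True,False,False,False,False,False,True], 252), ([False,False,False,False,True,False,False,False,False,True,False], - 210), ([False,False,False,False,True,False,False,False,True,False,False], 120), ([False,False,False,False,True,False,False,True,False,False,False], - 45), ([False,False,False,False,True,False,True,False,False,False,False], 10), ([False,False,False,False,True,True,False,False,False,False,False], - 1), ([False,False,False,True,False,False,False,False,False,False,True], - 210), ([False,False,False,True,False,False,False,False,False,True,False], 252), ([False,False,False,True,False,False,False,False,True,False,False], - 210), ([False,False,False,True,False,False,False,True,False,False,False], 120), ([False,False,False,True,False,False,True,False,False,False,False], - 45), ([False,False,False,True,False,True,False,False,False,False,False],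 10), ([False,False,False,True,True,False,False,False,False,False,False], - 1), ([False,False,True,False,False,False,False,False,False,False,True], 120), ([False,False,True,False,False,False,False,False,False,True,False], - 210), ([False,False,True,False,False,False,False,False,True,False,False], 252), ([False,False,True,False,False,False,False,True,False,False,False], - 210), ([False,False,True,False,False,False,True,False,False,False,False], 120), ([False,False,True,False,False,True,False,False,False,False,False], - 45), ([False,False,True,False,True,False,False,False,False,False,False], 10), ([False,False,True,True,False,False,False,False,False,False,False], - 1), ([False,True,False,False,False,False,False,False,False,False,True], - 45), ([False,True,False,False,False,False,False,False,False,True,False], 120), ([False,True,False,False,False,False,False,False,True,False,False], - 210), ([False,True,False,False,False,False,False,True,False,False,False], 252), ([False,True,False,False,False,False,True,False,False,False,False], - 210), ([False,True,False,False,False,True,False,False,False,False,False], 120), ([False,True,False,False,True,False,False,False,False,False,False], - 45), ([False,True,False,True,False,False,False,False,False,False,False], 10), ([False,True,True,False,False,False,False,False,False,False,False], - 1), ([True,False,False,False,False,False,False,False,False,False,True], 10), ([True,False,False,False,False,False,False,False,False,True,False], - 45), ([True,False,False,False,False,False,False,False,True,False,False], 120), ([True,False,False,False,False,False,False,True,False,False,False], - 210), ([True,False,False,False,False,False,True,False,False,False,False], 252), ([True,False,False,False,False,True,False,False,False,False,False], - 210), ([True,False,False,False,True,False,False,False,False,False,False], 120), ([True,False,False,True,False,False,False,False,False,False,False], - 45), ([True,False,True,False,False,False,False,False,False,False,False], 10), ([True,True,False,False,False,False,False,False,False,False,False], - 1)]"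

lemma comm_step:
  assumes "tzero (accP (-1) [] [] M (accP (-1) [] [False] L (accP 1 [False] [] L E)))"
  shows "comm X (interp L) = interp M"
proof
  fix v
  have "tval (accP (-1) [] [] M (accP (-1) [] [False] L (accP 1 [False] [] L E))) v = 0"
    by (rule tzero_tval[OF assms])
  then show "comm X (interp L) v = interp M v"
    by (simp add: tval_accP comm_def X_def)
qed

lemma adpow0: "adpow 0 X Y = interp adl0"
  by (simp add: adpow_0 adl0_def Y_def fun_eq_iff)

lemma adchk0: "tzero (accP (-1) [] [] adl1 (accP (-1) [] [False] adl0 (accP 1 [False] [] adl0 E)))"
  supply comp_congs[cong] unfolding adl0_def adl1_def by (simp only: comp_simps)
lemma adpow1: "adpow 1 X Y = interp adl1"
  using comm_step[OF adchk0] adpow0 by (simp add: numeral_eq_Suc adpow_Suc)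

lemma adchk1: "tzero (accP (-1) [] [] adl2 (accP (-1) [] [False] adl1 (accP 1 [False] [] adl1 E)))"
  supply comp_congs[cong] unfolding adl1_def adl2_def by (simp only: comp_simps)
lemma adpow2: "adpow 2 X Y = interp adl2"
  using comm_step[OF adchk1] adpow1 by (simp add: numeral_eq_Suc adpow_Suc)

lemma adchk2: "tzero (accP (-1) [] [] adl3 (accP (-1) [] [False] adl2 (accP 1 [False] [] adl2 E)))"
  supply comp_congs[cong] unfolding adl2_def adl3_def by (simp only: comp_simps)
lemma adpow3: "adpow 3 X Y = interp adl3"
  using comm_step[OF adchk2] adpow2 by (simp add: numeral_eq_Suc adpow_Suc)

lemma adchk3: "tzero (accP (-1) [] [] adl4 (accP (-1) [] [False] adl3 (accP 1 [False] [] adl3 E)))"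
  supply comp_congs[cong] unfolding adl3_def adl4_def by (simp only: comp_simps)
lemma adpow4: "adpow 4 X Y = interp adl4"
  using comm_step[OF adchk3] adpow3 by (simp add: numeral_eq_Suc adpow_Suc)

lemma adchk4: "tzero (accP (-1) [] [] adl5 (accP (-1) [] [False] adl4 (accP 1 [False] [] adl4 E)))"
  supply comp_congs[cong] unfolding adl4_def adl5_def by (simp only: comp_simps)
lemma adpow5: "adpow 5 X Y = interp adl5"
  using comm_step[OF adchk4] adpow4 by (simp add: numeral_eq_Suc adpow_Suc)

lemma adchk5: "tzero (accP (-1) [] [] adl6 (accP (-1) [] [False] adl5 (accP 1 [False] [] adl5 E)))"
  supply comp_congs[cong] unfolding adl5_def adl6_def by (simp only: comp_simps)
lemma adpow6: "adpow 6 X Y = interp adl6"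
  using comm_step[OF adchk5] adpow5 by (simp add: numeral_eq_Suc adpow_Suc)

lemma adchk6: "tzero (accP (-1) [] [] adl7 (accP (-1) [] [False] adl6 (accP 1 [False] [] adl6 E)))"
  supply comp_congs[cong] unfolding adl6_def adl7_def by (simp only: comp_simps)
lemma adpow7: "adpow 7 X Y = interp adl7"
  using comm_step[OF adchk6] adpow6 by (simp add: numeral_eq_Suc adpow_Suc)

lemma adchk7: "tzero (accP (-1) [] [] adl8 (accP (-1) [] [False] adl7 (accP 1 [False] [] adl7 E)))"
  supply comp_congs[cong] unfolding adl7_def adl8_def by (simp only: comp_simps)
lemma adpow8: "adpow 8 X Y = interp adl8"
  using comm_step[OF adchk7] adpow7 by (simp add: numeral_eq_Suc adpow_Suc)

lemma adchk8: "tzero (accP (-1) [] [] adl9 (accP (-1) [] [False] adl8 (accP 1 [False] [] adl8 E)))"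
  supply comp_congs[cong] unfolding adl8_def adl9_def by (simp only: comp_simps)
lemma adpow9: "adpow 9 X Y = interp adl9"
  using comm_step[OF adchk8] adpow8 by (simp add: numeral_eq_Suc adpow_Suc)

lemma adchk9: "tzero (accP (-1) [] [] adl10 (accP (-1) [] [False] adl9 (accP 1 [False] [] adl9 E)))"
  supply comp_congs[cong] unfolding adl9_def adl10_def by (simp only: comp_simps)
lemma adpow10: "adpow 10 X Y = interp adl10"
  using comm_step[OF adchk9] adpow9 by (simp add: numeral_eq_Suc adpow_Suc)

lemma eychk2: "tzero (accP (-1) [] [] g2y (accM (-1) adl1 adl2 (accM 1 adl2 adl1 (accM 1 adl0 adl3 (accM (-1) adl3 adl0 E)))))"
  supply comp_congs[cong] unfolding adl0_def adl1_def adl2_def adl3_def adl4_def adl5_def adl6_def adl7_def adl8_def adl9_def adl10_def g2y_def g3y_def g4y_def g5y_def by (simp only: comp_simps)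
lemma eps_y2: "eps_y 2 = interp g2y"
proof
  fix v
  have "tval (accP (-1) [] [] g2y (accM (-1) adl1 adl2 (accM 1 adl2 adl1 (accM 1 adl0 adl3 (accM (-1) adl3 adl0 E))))) v = 0" by (rule tzero_tval[OF eychk2])
  moreover have "{..<2::nat} = {0,1}" by auto
  ultimately show "eps_y 2 v = interp g2y v"
    by (simp add: eps_y_def tval_accM tval_accP comm_def adpow1 adpow2 adpow3 adpow4 adpow5 adpow6 adpow7 adpow8 adpow9 adpow10 adpow0 adpow1[simplified] algebra_simps)
qed

lemma eychk3: "tzero (accP (-1) [] [] g3y (accM 1 adl2 adl3 (accM (-1) adl3 adl2 (accM (-1) adl1 adl4 (accM 1 adl4 adl1 (accM 1 adl0 adl5 (accM (-1) adl5 adl0 E)))))))"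
  supply comp_congs[cong] unfolding adl0_def adl1_def adl2_def adl3_def adl4_def adl5_def adl6_def adl7_def adl8_def adl9_def adl10_def g2y_def g3y_def g4y_def g5y_def by (simp only: comp_simps)
lemma eps_y3: "eps_y 3 = interp g3y"
proof
  fix v
  have "tval (accP (-1) [] [] g3y (accM 1 adl2 adl3 (accM (-1) adl3 adl2 (accM (-1) adl1 adl4 (accM 1 adl4 adl1 (accM 1 adl0 adl5 (accM (-1) adl5 adl0 E))))))) v = 0" by (rule tzero_tval[OF eychk3])
  moreover have "{..<3::nat} = {0,1,2}" by auto
  ultimately show "eps_y 3 v = interp g3y v"
    by (simp add: eps_y_def tval_accM tval_accP comm_def adpow1 adpow2 adpow3 adpow4 adpow5 adpow6 adpow7 adpow8 adpow9 adpow10 adpow0 adpow1[simplified] algebra_simps)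
qed

lemma eychk4: "tzero (accP (-1) [] [] g4y (accM (-1) adl3 adl4 (accM 1 adl4 adl3 (accM 1 adl2 adl5 (accM (-1) adl5 adl2 (accM (-1) adl1 adl6 (accM 1 adl6 adl1 (accM 1 adl0 adl7 (accM (-1) adl7 adl0 E)))))))))"
  supply comp_congs[cong] unfolding adl0_def adl1_def adl2_def adl3_def adl4_def adl5_def adl6_def adl7_def adl8_def adl9_def adl10_def g2y_def g3y_def g4y_def g5y_def by (simp only: comp_simps)
lemma eps_y4: "eps_y 4 = interp g4y"
proof
  fix v
  have "tval (accP (-1) [] [] g4y (accM (-1) adl3 adl4 (accM 1 adl4 adl3 (accM 1 adl2 adl5 (accM (-1) adl5 adl2 (accM (-1) adl1 adl6 (accM 1 adl6 adl1 (accM 1 adl0 adl7 (accM (-1) adl7 adl0 E))))))))) v = 0" by (rule tzero_tval[OF eychk4])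
  moreover have "{..<4::nat} = {0,1,2,3}" by auto
  ultimately show "eps_y 4 v = interp g4y v"
    by (simp add: eps_y_def tval_accM tval_accP comm_def adpow1 adpow2 adpow3 adpow4 adpow5 adpow6 adpow7 adpow8 adpow9 adpow10 adpow0 adpow1[simplified] algebra_simps)
qed

lemma eychk5: "tzero (accP (-1) [] [] g5y (accM 1 adl4 adl5 (accM (-1) adl5 adl4 (accM (-1) adl3 adl6 (accM 1 adl6 adl3 (accM 1 adl2 adl7 (accM (-1) adl7 adl2 (accM (-1) adl1 adl8 (accM 1 adl8 adl1 (accM 1 adl0 adl9 (accM (-1) adl9 adl0 E)))))))))))"
  supply comp_congs[cong] unfolding adl0_def adl1_def adl2_def adl3_def adl4_def adl5_def adl6_def adl7_def adl8_def adl9_def adl10_def g2y_def g3y_def g4y_def g5y_def by (simp only: comp_simps)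
lemma eps_y5: "eps_y 5 = interp g5y"
proof
  fix v
  have "tval (accP (-1) [] [] g5y (accM 1 adl4 adl5 (accM (-1) adl5 adl4 (accM (-1) adl3 adl6 (accM 1 adl6 adl3 (accM 1 adl2 adl7 (accM (-1) adl7 adl2 (accM (-1) adl1 adl8 (accM 1 adl8 adl1 (accM 1 adl0 adl9 (accM (-1) adl9 adl0 E))))))))))) v = 0" by (rule tzero_tval[OF eychk5])
  moreover have "{..<5::nat} = {0,1,2,3,4}" by auto
  ultimately show "eps_y 5 v = interp g5y v"
    by (simp add: eps_y_def tval_accM tval_accP comm_def adpow1 adpow2 adpow3 adpow4 adpow5 adpow6 adpow7 adpow8 adpow9 adpow10 adpow0 adpow1[simplified] algebra_simps)
qed


section \<open>The relation\<close>

lemma eps_x_lit: "eps_x 2 = interp adl4" "eps_x 3 = interp adl6" "eps_x 4 = interp adl8" "eps_x 5 = interp adl10"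
  by (simp_all add: eps_x_def adpow4 adpow6 adpow8 adpow10)

lemma hx2: "interp adl4 = eps_gen 2 False" and hy2: "interp g2y = eps_gen 2 True"
  and hx3: "interp adl6 = eps_gen 3 False" and hy3: "interp g3y = eps_gen 3 True"
  and hx4: "interp adl8 = eps_gen 4 False" and hy4: "interp g4y = eps_gen 4 True"
  and hx5: "interp adl10 = eps_gen 5 False" and hy5: "interp g5y = eps_gen 5 True"
  by (simp_all add: eps_gen_def eps_x_lit eps_y2 eps_y3 eps_y4 eps_y5)

lemma Dop_gen: "Dop k (mono [a]) = eps_gen k a"
  by (simp add: Dop_lin Dword_Cons)

definition delta :: "bool ncpoly \<Rightarrow> bool ncpoly" where
  "delta p = (\<lambda>v. Dop 5 (Dop 2 p) v - Dop 2 (Dop 5 p) v - 3 * (Dop 4 (Dop 3 p) v - Dop 3 (Dop 4 p) v))"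

lemma goodop_delta: "goodop delta"
proof -
  have "goodop (\<lambda>p w. (\<lambda>p w. Dop 5 (Dop 2 p) w - Dop 2 (Dop 5 p) w) p w - 3 * (\<lambda>p w. Dop 4 (Dop 3 p) w - Dop 3 (Dop 4 p) w) p w)"
    by (intro goodop_lincomb goodop_commutator goodop_Dop)
  moreover have "delta = (\<lambda>p w. (\<lambda>p w. Dop 5 (Dop 2 p) w - Dop 2 (Dop 5 p) w) p w - 3 * (\<lambda>p w. Dop 4 (Dop 3 p) w - Dop 3 (Dop 4 p) w) p w)"
    by (simp add: delta_def fun_eq_iff)
  ultimately show ?thesis by simp
qed

lemma dxchk: "tzero (accD adl6 g3y 3 adl8 (accD adl8 g4y (-3) adl6 (accD adl4 g2y (-1) adl10 (accD adl10 g5y 1 adl4 E))))"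
  supply comp_congs[cong] unfolding adl4_def adl6_def adl8_def adl10_def g2y_def g3y_def g4y_def g5y_def by (simp only: comp_simps)

lemma dychk: "tzero (accD adl6 g3y 3 g4y (accD adl8 g4y (-3) g3y (accD adl4 g2y (-1) g5y (accD adl10 g5y 1 g2y E))))"
  supply comp_congs[cong] unfolding adl4_def adl6_def adl8_def adl10_def g2y_def g3y_def g4y_def g5y_def by (simp only: comp_simps)

lemma delta_X: "delta (mono [False]) = (\<lambda>v. 0)"
proof
  fix v
  have "tval (accD adl6 g3y 3 adl8 (accD adl8 g4y (-3) adl6 (accD adl4 g2y (-1) adl10 (accD adl10 g5y 1 adl4 E)))) v = 0" by (rule tzero_tval[OF dxchk])
  then show "delta (mono [False]) v = 0"
    by (simp add: delta_def Dop_gen tval_accD[OF hx2 hy2] tval_accD[OF hx3 hy3] tval_accD[OF hx4 hy4]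
        tval_accD[OF hx5 hy5] flip: hx2 hx3 hx4 hx5)
qed

lemma delta_Y: "delta (mono [True]) = (\<lambda>v. 0)"
proof
  fix v
  have "tval (accD adl6 g3y 3 g4y (accD adl8 g4y (-3) g3y (accD adl4 g2y (-1) g5y (accD adl10 g5y 1 g2y E)))) v = 0" by (rule tzero_tval[OF dychk])
  then show "delta (mono [True]) v = 0"
    by (simp add: delta_def Dop_gen tval_accD[OF hx2 hy2] tval_accD[OF hx3 hy3] tval_accD[OF hx4 hy4]
        tval_accD[OF hx5 hy5] flip: hy2 hy3 hy4 hy5)
qed

lemma delta_lie: "p \<in> lie_span \<Longrightarrow> delta p = (\<lambda>v. 0)"
  using goodop_kills_lie_span[OF goodop_delta delta_X delta_Y] by blast


definition Prel :: "nat ncpoly" where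
  "Prel = (\<lambda>w. comm (mono [5]) (mono [2]) w + (-3) * comm (mono [4]) (mono [3]) w)"

lemma Prel_lie: "Prel \<in> lie_span"
proof -
  have "(\<lambda>w. comm (mono [5]) (mono [2]) w + (\<lambda>w. (-3) * comm (mono [4]) (mono [3]) w) w) \<in> lie_span"
    by (intro lie_span.add lie_span.smult lie_span.bracket lie_span.gen)
  then show ?thesis by (simp add: Prel_def)
qed

lemma Prel_val: "Prel = (\<lambda>w. mono [5,2] w - mono [2,5] w - 3 * mono [4,3] w + 3 * mono [3,4] w)"
  by (simp add: Prel_def comm_def fun_eq_iff)

lemma supp_Prel: "supp Prel = {[5,2],[2,5],[4,3],[3,4]}"
  by (auto simp: supp_def Prel_val mono_def)

lemma rho_Prel: "rho Prel p = delta p"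
proof -
  have "rho Prel p = (\<lambda>v. \<Sum>u\<in>{[5,2],[2,5],[4,3],[3,4]}. Prel u * foldr Dop u p v)"
    by (simp only: rho_def supp_Prel)
  then show ?thesis by (simp add: Prel_val mono_def delta_def fun_eq_iff algebra_simps)
qed

lemma Prel_rel: "Prel \<in> lie_rel"
  unfolding lie_rel_def using Prel_lie delta_lie by (simp add: rho_Prel)

theorem mainTheorem9:
  fixes a b c d :: rat
  assumes "(\<lambda>v::nat list. a * mono [5,2] v + b * mono [2,5] v + c * mono [4,3] v + d * mono [3,4] v)
             \<in> U_dual"
  shows "\<exists>\<alpha> \<beta> \<gamma> :: rat.
           (\<lambda>v::nat list. a * mono [5,2] v + b * mono [2,5] v + c * mono [4,3] v + d * mono [3,4] v) =
           (\<lambda>v::nat list. \<alpha> * shuffle (mono [5]) (mono [2]) v + \<beta> * shuffle (mono [4]) (mono [3]) v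
                 + \<gamma> * (3 * mono [5,2] v + mono [4,3] v))"
proof -
  let ?phi = "(\<lambda>v::nat list. a * mono [5,2] v + b * mono [2,5] v + c * mono [4,3] v + d * mono [3,4] v)"
  have "Prel \<in> U_ideal" by (rule U_ideal.gen[OF Prel_rel])
  then have "pairing ?phi Prel = 0" using assms by (simp add: U_dual_def)
  moreover have "pairing ?phi Prel = (\<Sum>w\<in>{[5,2],[2,5],[4,3],[3,4]}. ?phi w * Prel w)"
    by (simp only: pairing_def supp_Prel)
  ultimately have rel: "a - b - 3 * c + 3 * d = 0"
    by (simp add: Prel_val mono_def algebra_simps)
  have sh: "\<And>x y :: nat. shuffle (mono [x]) (mono [y]) = (\<lambda>w. mono [x,y] w + mono [y,x] w)"
  proof -
    fix x y :: nat
    have s: "\<And>z::nat. supp (mono [z]) = {[z]}" by (auto simp: supp_def mono_def)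
    have m: "\<And>w::nat list. mono w w = 1" by (simp add: mono_def)
    have "shuffle (mono [x]) (mono [y]) = (\<lambda>w. \<Sum>u\<in>{[x]}. \<Sum>v\<in>{[y]}. mono [x] u * mono [y] v * shw u v w)"
      by (simp only: shuffle_def s)
    then show "shuffle (mono [x]) (mono [y]) = (\<lambda>w. mono [x,y] w + mono [y,x] w)"
      by (simp add: m)
  qed
  have a_eq: "a = b + 3 * c - 3 * d" using rel by linarith
  show ?thesis
    by (rule exI[of _ b], rule exI[of _ d], rule exI[of _ "c - d"])
       (simp add: sh a_eq fun_eq_iff algebra_simps)
qed

end
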